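(* Let $\ell\in\{0,1,2,3\}$, $M,H\in\mathbb N$ and $p\in X_\ell$. Then there is a set $\Lambda\subseteq\mathbb N$ such that (1) $\lim_{N\to\infty}\frac1N\#(\{1,\dots,N\}\cap\Lambda)=1$, and (2) for every $n\in\Lambda$, the truncation $[T^{n+h}p]_M$ is the same for all $0\le h\le H-1$.
   Context: Fix integers $2\le q_1<q_2<\cdots$ such that $q_{k+1}>q_k^4+3q_k$ for every $k\ge1$. For $k\ge1$ put $q^{(0)}_k=q_{2k}$, $q^{(1)}_k=q_{2k+1}$, $q^{(2)}_k=q^{(0)}_k-1$, $q^{(3)}_k=q^{(1)}_k-1$, and $L^{(i)}_k=\lfloor q^{(i)}_{k+1}/(3q^{(i)}_k)\rfloor$. Let $s^{(i)}_k\in\{-1,0,1\}^{\mathbb N}$ (indices $n\ge1$) be given by $s^{(i)}_k(n)=1$ if $n=jq^{(i)}_k$ with $1\le j\le L^{(i)}_k$, $s^{(i)}_k(n)=-1$ if $n=jq^{(i)}_k$ with $L^{(i)}_k<j\le2L^{(i)}_k$, and $s^{(i)}_k(n)=0$ otherwise. For $w\in\{-1,0,1\}^{\mathbb N}$ and $p\in\mathbb N_0$ let $\sigma^{-p}w$ be defined by $(\sigma^{-p}w)(n)=0$ for $1\le n\le p$ and $(\sigma^{-p}w)(n)=w(n-p)$ for $n>p$. For $l\le m$ write $w|_l^m=(w_l,\dots,w_m)$. Let $R^{(i)}_k=\{(\sigma^{-p}s^{(i)}_k)|_{q^{(i)}_k}^{q^{(i)}_{k+1}-1}:p=0,1,\dots,q^{(i)}_k\}$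 and $P^{(i)}=\{y\in\{-1,0,1\}^{\mathbb N}: y(n)=0\text{ for }1\le n<q^{(i)}_1,\ y|_{q^{(i)}_k}^{q^{(i)}_{k+1}-1}\in R^{(i)}_k\text{ for all }k\ge1\}$. Let $Z=\{-1,0,1\}^{\mathbb N}\times\{-1,0,1\}^{\mathbb Z}$, where each factor carries the metric $d(u,v)=3^{-\min\{|m|:u_m\neq v_m\}}$ and $Z$ the maximum of the two. $\sigma$ is the left shift $(\sigma u)_m=u_{m+1}$ (invertible on $\{-1,0,1\}^{\mathbb Z}$). Define $T:Z\to Z$, $T(y,z)=(\sigma y,\sigma^{y_1}z)$, and $X_i=\overline{\bigcup_{n\ge0}T^n(P^{(i)}\times\{-1,0,1\}^{\mathbb Z})}$ for $i\in\{0,1,2,3\}$. For $p=(y,z)\in Z$ and $M\in\mathbb N$, $[p]_M=((y_1,\dots,y_M),(z_{-M},\dots,z_M))$. *)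

theory Defs
  imports Complex_Main
begin

text \<open>One-sided sequences in {-1,0,1}^N (indices n >= 1) are functions nat => int,
  with the unused index 0 normalised to 0. Two-sided sequences are int => int.\<close>

definition Yspace :: "(nat \<Rightarrow> int) set" where
  "Yspace = {y. y 0 = 0 \<and> (\<forall>n. y n \<in> {-1, 0, 1})}"

definition Zspace :: "(int \<Rightarrow> int) set" where
  "Zspace = {z. \<forall>m. z m \<in> {-1, 0, 1}}"

definition Zprod :: "((nat \<Rightarrow> int) \<times> (int \<Rightarrow> int)) set" where
  "Zprod = Yspace \<times> Zspace"

definition distY :: "(nat \<Rightarrow> int) \<Rightarrow> (nat \<Rightarrow> int) \<Rightarrow> real" where
  "distY u v = (if (\<forall>n\<ge>1. u n = v n) then 0
                else 3 powr (- real (LEAST n. n \<ge> 1 \<and> u n \<noteq> v n)))"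

definition distZ :: "(int \<Rightarrow> int) \<Rightarrow> (int \<Rightarrow> int) \<Rightarrow> real" where
  "distZ u v = (if u = v then 0
                else 3 powr (- real (LEAST k::nat. \<exists>m. \<bar>m\<bar> = int k \<and> u m \<noteq> v m)))"

definition distP :: "((nat \<Rightarrow> int) \<times> (int \<Rightarrow> int)) \<Rightarrow> ((nat \<Rightarrow> int) \<times> (int \<Rightarrow> int)) \<Rightarrow> real" where
  "distP a b = max (distY (fst a) (fst b)) (distZ (snd a) (snd b))"

definition Zclosure :: "((nat \<Rightarrow> int) \<times> (int \<Rightarrow> int)) set \<Rightarrow> ((nat \<Rightarrow> int) \<times> (int \<Rightarrow> int)) set" where
  "Zclosure S = {x \<in> Zprod. \<forall>e>0. \<exists>s\<in>S. distP x s < e}"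

definition shiftY :: "(nat \<Rightarrow> int) \<Rightarrow> (nat \<Rightarrow> int)" where
  "shiftY y = (\<lambda>n. if n = 0 then 0 else y (n + 1))"

definition shiftZ :: "int \<Rightarrow> (int \<Rightarrow> int) \<Rightarrow> (int \<Rightarrow> int)" where
  "shiftZ k z = (\<lambda>m. z (m + k))"

definition Tmap :: "((nat \<Rightarrow> int) \<times> (int \<Rightarrow> int)) \<Rightarrow> ((nat \<Rightarrow> int) \<times> (int \<Rightarrow> int))" where
  "Tmap p = (shiftY (fst p), shiftZ (fst p 1) (snd p))"

definition rshift :: "nat \<Rightarrow> (nat \<Rightarrow> int) \<Rightarrow> (nat \<Rightarrow> int)" where
  "rshift p w = (\<lambda>n. if n \<le> p then 0 else w (n - p))"

definition qi :: "(nat \<Rightarrow> nat) \<Rightarrow> nat \<Rightarrow> nat \<Rightarrow> nat" where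
  "qi q i k = (if i = 0 then q (2*k) else if i = 1 then q (2*k+1)
               else if i = 2 then q (2*k) - 1 else q (2*k+1) - 1)"

definition Li :: "(nat \<Rightarrow> nat) \<Rightarrow> nat \<Rightarrow> nat \<Rightarrow> nat" where
  "Li q i k = nat \<lfloor>real (qi q i (k+1)) / (3 * real (qi q i k))\<rfloor>"

definition si :: "(nat \<Rightarrow> nat) \<Rightarrow> nat \<Rightarrow> nat \<Rightarrow> (nat \<Rightarrow> int)" where
  "si q i k = (\<lambda>n.
     if n \<ge> 1 \<and> (\<exists>j. 1 \<le> j \<and> j \<le> Li q i k \<and> n = j * qi q i k) then 1
     else if n \<ge> 1 \<and> (\<exists>j. Li q i k < j \<and> j \<le> 2 * Li q i k \<and> n = j * qi q i k) then -1
     else 0)"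

definition seg :: "(nat \<Rightarrow> int) \<Rightarrow> nat \<Rightarrow> nat \<Rightarrow> int list" where
  "seg w l m = map w [l..<m+1]"

definition Ri :: "(nat \<Rightarrow> nat) \<Rightarrow> nat \<Rightarrow> nat \<Rightarrow> int list set" where
  "Ri q i k = {seg (rshift p (si q i k)) (qi q i k) (qi q i (k+1) - 1) | p. p \<le> qi q i k}"

definition Pi :: "(nat \<Rightarrow> nat) \<Rightarrow> nat \<Rightarrow> (nat \<Rightarrow> int) set" where
  "Pi q i = {y \<in> Yspace. (\<forall>n. 1 \<le> n \<and> n < qi q i 1 \<longrightarrow> y n = 0) \<and>
                         (\<forall>k\<ge>1. seg y (qi q i k) (qi q i (k+1) - 1) \<in> Ri q i k)}"

definition Xi :: "(nat \<Rightarrow> nat) \<Rightarrow> nat \<Rightarrow> ((nat \<Rightarrow> int) \<times> (int \<Rightarrow> int)) set" where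
  "Xi q i = Zclosure (\<Union>n. (Tmap ^^ n) ` (Pi q i \<times> Zspace))"

definition trunc :: "nat \<Rightarrow> ((nat \<Rightarrow> int) \<times> (int \<Rightarrow> int)) \<Rightarrow> int list \<times> int list" where
  "trunc M p = (map (fst p) [1..<M+1], map (snd p) [- int M..int M])"

end

theory Submission imports Defs begin

lemma q_ge2:
  fixes q :: "nat \<Rightarrow> nat"
  assumes "2 \<le> q 1" "\<And>k. k \<ge> 1 \<Longrightarrow> q k < q (k+1)"
  shows "m \<ge> 1 \<Longrightarrow> q m \<ge> 2"
proof (induction m)
  case 0 then show ?case by simp
next
  case (Suc m)
  show ?case
  proof (cases "m = 0")
    case True then show ?thesis using assms(1) by simp
  next
    case False
    then have "q m \<ge> 2" using Suc by simp
    moreover have "q m < q (m+1)" using assms(2) False by simp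
    ultimately show ?thesis by simp
  qed
qed

lemma q_step:
  fixes q :: "nat \<Rightarrow> nat"
  assumes "2 \<le> q 1" "\<And>k. k \<ge> 1 \<Longrightarrow> q k < q (k+1)"
    "\<And>k. k \<ge> 1 \<Longrightarrow> q (k+1) > q k ^ 4 + 3 * q k"
    "m \<ge> 1"
  shows "q (m+2) \<ge> 8 * q m + 1"
proof -
  have a: "q (m+1) \<ge> 2" using q_ge2[OF assms(1,2)] by simp
  have "q (m+1) ^ 4 = q (m+1) * q (m+1)^3" by (simp add: power_eq_if)
  moreover have "q (m+1)^3 \<ge> 8" using power_mono[OF a, of 3] by simp
  ultimately have "q (m+1) ^ 4 \<ge> q (m+1) * 8" by (metis mult_le_mono2 power3_eq_cube numeral_times_numeral semiring_norm(12) semiring_norm(13) ) 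
  moreover have "q (m+2) > q (m+1)^4" using assms(3)[of "m+1"] by simp
  moreover have "q (m+1) > q m" using assms(2,4) by simp
  ultimately show ?thesis by linarith
qed


lemma fst_iter: "m \<ge> 1 \<Longrightarrow> fst ((Tmap ^^ n) x) m = fst x (m + n)"
  by (induction n arbitrary: m) (auto simp: Tmap_def shiftY_def)

lemma snd_iter: "snd ((Tmap ^^ n) x) = (\<lambda>m. snd x (m + (\<Sum>i\<in>{1..n}. fst x i)))"
proof (induction n)
  case 0 then show ?case by simp
next
  case (Suc n)
  have "fst ((Tmap ^^ n) x) 1 = fst x (Suc n)" using fst_iter[of 1 n x] by simp
  have st: "\<And>p. snd (Tmap p) = (\<lambda>m. snd p (m + fst p 1))" by (simp add: Tmap_def shiftZ_def)
  have "snd ((Tmap ^^ Suc n) x) = (\<lambda>m. snd ((Tmap ^^ n) x) (m + fst ((Tmap ^^ n) x) 1))"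
    by (simp only: funpow.simps comp_def st)
  also have "\<dots> = (\<lambda>m. snd x (m + fst x (Suc n) + (\<Sum>i\<in>{1..n}. fst x i)))"
    using Suc \<open>fst ((Tmap ^^ n) x) 1 = fst x (Suc n)\<close> by simp
  also have "\<dots> = (\<lambda>m. snd x (m + (\<Sum>i\<in>{1..Suc n}. fst x i)))" by (simp add: ac_simps)
  finally show ?case .
qed

definition good :: "nat \<Rightarrow> nat \<Rightarrow> (nat \<Rightarrow> int) \<Rightarrow> bool" where
  "good D N0 y \<longleftrightarrow> (\<forall>a b. 1 \<le> a \<longrightarrow> N0 \<le> a \<longrightarrow> a < b \<longrightarrow> y a \<noteq> 0 \<longrightarrow> y b \<noteq> 0 \<longrightarrow> D \<le> b - a)"

lemma distY_agree: assumes "distY u v < 3 powr (- real b)" "1 \<le> n" "n \<le> b" shows "u n = v n"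
proof (rule ccontr)
  assume ne: "u n \<noteq> v n"
  let ?L = "LEAST n. n \<ge> 1 \<and> u n \<noteq> v n"
  have Ln: "?L \<le> n" using ne assms by (intro Least_le) auto
  have "distY u v = 3 powr (- real ?L)" using ne assms unfolding distY_def by auto
  moreover have "3 powr (- real b) \<le> 3 powr (- real ?L)" using Ln assms by (intro powr_mono) auto
  ultimately show False using assms(1) by simp
qed

lemma good_closure: assumes "\<forall>s\<in>S. good D N0 (fst s)" "x \<in> Zclosure S" shows "good D N0 (fst x)"
  unfolding good_def
proof (intro allI impI)
  fix a b assume h: "1 \<le> a" "N0 \<le> a" "a < b" "fst x a \<noteq> 0" "fst x b \<noteq> 0"
  have "(3::real) powr (- real b) > 0" by simp
  then obtain s where s: "s \<in> S" "distP x s < 3 powr (- real b)" using assms(2) unfolding Zclosure_def by blast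
  have d: "distY (fst x) (fst s) < 3 powr (- real b)" using s(2) unfolding distP_def by simp
  have "fst x a = fst s a" "fst x b = fst s b" using distY_agree[OF d] h by auto
  then show "D \<le> b - a" using assms(1) s(1) h unfolding good_def by auto
qed

lemma count_bad:
  fixes y :: "nat \<Rightarrow> int"
  assumes g: "good D N0 y" and D: "D \<ge> 1"
  shows "card ({1..N} \<inter> {n. 1 \<le> n \<and> (\<exists>t. n < t \<and> t \<le> n + W \<and> y t \<noteq> 0)}) \<le> N0 + W * ((N+W) div D + 1)"
proof -
  define T where "T = {t. N0 < t \<and> t \<le> N+W \<and> y t \<noteq> 0}"
  have finT: "finite T" unfolding T_def by (rule finite_subset[of _ "{..N+W}"]) auto
  let ?U = "\<Union>t\<in>T. {t-W..<t}"
  have sub: "{1..N} \<inter> {n. 1 \<le> n \<and> (\<exists>t. n < t \<and> t \<le> n + W \<and> y t \<noteq> 0)} \<subseteq> {1..N0} \<union> ?U"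
  proof
    fix n assume n: "n \<in> {1..N} \<inter> {n. 1 \<le> n \<and> (\<exists>t. n < t \<and> t \<le> n + W \<and> y t \<noteq> 0)}"
    show "n \<in> {1..N0} \<union> ?U"
    proof (cases "n \<le> N0")
      case True then show ?thesis using n by auto
    next
      case False
      from n obtain t where t: "n < t" "t \<le> n + W" "y t \<noteq> 0" by auto
      have "t \<in> T" using t n False unfolding T_def by auto
      moreover have "n \<in> {t-W..<t}" using t by auto
      ultimately show ?thesis by blast
    qed
  qed
  have c1: "card ?U \<le> W * card T"
  proof -
    have "card ?U \<le> (\<Sum>t\<in>T. card {t-W..<t})" by (rule card_UN_le[OF finT])
    also have "\<dots> \<le> (\<Sum>t\<in>T. W)" by (rule sum_mono) simp
    finally show ?thesis by (simp add: mult.commute)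
  qed
  have inj: "inj_on (\<lambda>t. t div D) T"
  proof (rule inj_onI, rule ccontr)
    fix t t' assume tt: "t \<in> T" "t' \<in> T" "t div D = t' div D" "t \<noteq> t'"
    have key: "\<And>u v. u \<in> T \<Longrightarrow> v \<in> T \<Longrightarrow> u div D = v div D \<Longrightarrow> u < v \<Longrightarrow> False"
    proof -
      fix u v assume uv: "u \<in> T" "v \<in> T" "u div D = v div D" "u < v"
      have "D \<le> v - u" using g uv unfolding good_def T_def by auto
      moreover have "u = v div D * D + u mod D" "v = v div D * D + v mod D" using uv(3) by (metis div_mult_mod_eq)+
      moreover have "v mod D < D" using D by simp
      ultimately show False using uv(3) by linarith
    qed
    show False using tt key[of t t'] key[of t' t] by (cases "t < t'") auto
  qed
  have c2: "card T \<le> (N+W) div D + 1"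
  proof -
    have "card T = card ((\<lambda>t. t div D) ` T)" using card_image[OF inj] by simp
    also have "\<dots> \<le> card {0..(N+W) div D}"
      by (rule card_mono) (auto simp: T_def intro: div_le_mono)
    finally show ?thesis by simp
  qed
  have "card ({1..N} \<inter> {n. 1 \<le> n \<and> (\<exists>t. n < t \<and> t \<le> n + W \<and> y t \<noteq> 0)}) \<le> card ({1..N0} \<union> ?U)"
    by (rule card_mono[OF _ sub]) (use finT in auto)
  also have "\<dots> \<le> card {1..N0} + card ?U" by (rule card_Un_le)
  also have "\<dots> \<le> N0 + W * ((N+W) div D + 1)" using c1 c2 mult_le_mono2[OF c2, of W] by simp
  finally show ?thesis .
qed


lemma density:
  fixes y :: "nat \<Rightarrow> int" and W :: nat
  assumes g: "\<And>D. \<exists>N0. good D N0 y"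
    and Lam: "Lam = {n. 1 \<le> n \<and> (\<forall>t. n < t \<and> t \<le> n + W \<longrightarrow> y t = 0)}"
  shows "(\<lambda>N. real (card ({1..N} \<inter> Lam)) / real N) \<longlonglongrightarrow> 1"
proof (rule LIMSEQ_I)
  fix r :: real assume r: "0 < r"
  define Bad where "Bad = {n. 1 \<le> n \<and> (\<exists>t. n < t \<and> t \<le> n + W \<and> y t \<noteq> 0)}"
  define D where "D = nat \<lceil>2 * real W / r\<rceil> + 1"
  obtain N0 where N0: "good D N0 y" using g by blast
  define K where "K = N0 + W + W * W"
  define no where "no = nat \<lceil>2 * real K / r\<rceil> + 1"
  have D1: "D \<ge> 1" by (simp add: D_def)
  have Dr: "real W / real D < r / 2"
  proof -
    have "real (nat \<lceil>2 * real W / r\<rceil>) \<ge> 2 * real W / r" by (rule real_nat_ceiling_ge)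
    then have "real D > 2 * real W / r" unfolding D_def by simp
    then have "real D * r > 2 * real W" using r by (simp add: field_simps)
    then show ?thesis using D1 by (simp add: field_simps)
  qed
  show "\<exists>no. \<forall>N\<ge>no. norm (real (card ({1..N} \<inter> Lam)) / real N - 1) < r"
  proof (intro exI allI impI)
    fix N assume N: "no \<le> N"
    have N1: "N \<ge> 1" using N no_def by simp
    have "real (nat \<lceil>2 * real K / r\<rceil>) \<ge> 2 * real K / r" by (rule real_nat_ceiling_ge)
    then have "real N > 2 * real K / r" using N unfolding no_def by linarith
    then have "real N * r > 2 * real K" using r by (simp add: field_simps)
    then have KN: "real K / real N < r / 2" using N1 by (simp add: field_simps)
    have part: "({1..N} \<inter> Lam) \<union> ({1..N} \<inter> Bad) = {1..N}" using Lam Bad_def by auto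
    have disj: "({1..N} \<inter> Lam) \<inter> ({1..N} \<inter> Bad) = {}" using Lam Bad_def by auto
    have AB: "card ({1..N} \<inter> Lam) + card ({1..N} \<inter> Bad) = N"
      using card_Un_disjoint[of "{1..N} \<inter> Lam" "{1..N} \<inter> Bad"] part disj by simp
    have B: "card ({1..N} \<inter> Bad) \<le> N0 + W * ((N+W) div D + 1)"
      using count_bad[OF N0 D1, of N W] unfolding Bad_def by simp
    have dv: "real ((N+W) div D) \<le> (real N + real W) / real D"
      using of_nat_div_le_of_nat[of "N+W" D] by simp
    have "real W * real ((N+W) div D) \<le> real W * ((real N + real W) / real D)"
      using dv by (intro mult_left_mono) auto
    also have "\<dots> = real W * real N / real D + real W * real W / real D" by (simp add: add_divide_distrib distrib_left)
    also have "\<dots> \<le> real W * real N / real D + real W * real W"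
      using divide_left_mono[of 1 "real D" "real W * real W"] D1 by simp
    finally have WW: "real W * real ((N+W) div D) \<le> real W * real N / real D + real W * real W" .
    have "real (card ({1..N} \<inter> Bad)) \<le> real N0 + real W * real ((N+W) div D) + real W"
      using B by (simp add: algebra_simps) (metis of_nat_add of_nat_le_iff of_nat_mult add.commute add.left_commute)
    then have B': "real (card ({1..N} \<inter> Bad)) \<le> real K + real W * real N / real D"
      using WW unfolding K_def by simp
    have eq: "real (card ({1..N} \<inter> Lam)) / real N - 1 = - (real (card ({1..N} \<inter> Bad)) / real N)"
    proof -
      have "real (card ({1..N} \<inter> Lam)) = real N - real (card ({1..N} \<inter> Bad))" using AB by linarith
      then have "real (card ({1..N} \<inter> Lam)) / real N = real N / real N - real (card ({1..N} \<inter> Bad)) / real N"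
        by (simp add: diff_divide_distrib)
      then show ?thesis using N1 by simp
    qed
    have "real (card ({1..N} \<inter> Bad)) / real N \<le> (real K + real W * real N / real D) / real N"
      using B' N1 by (intro divide_right_mono) auto
    also have "\<dots> = real K / real N + real W / real D" using N1 by (simp add: field_simps)
    finally have "real (card ({1..N} \<inter> Bad)) / real N < r" using KN Dr by linarith
    then show "norm (real (card ({1..N} \<inter> Lam)) / real N - 1) < r" unfolding eq by simp
  qed
qed

locale qs =
  fixes q :: "nat \<Rightarrow> nat" and l :: nat
  assumes q1: "2 \<le> q 1" and qinc: "\<And>k. k \<ge> 1 \<Longrightarrow> q k < q (k+1)"
    and qgr: "\<And>k. k \<ge> 1 \<Longrightarrow> q (k+1) > q k ^ 4 + 3 * q k"
    and lin: "l \<in> {0, 1, 2, 3}"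
begin

abbreviation "Q \<equiv> qi q l"

lemma Qpos: "k \<ge> 1 \<Longrightarrow> Q k \<ge> 1"
  using q_ge2[OF q1 qinc, of "2*k"] q_ge2[OF q1 qinc, of "2*k+1"] lin
  by (auto simp: qi_def)

lemma Qstep: assumes "k \<ge> 1" shows "Q (k+1) \<ge> 6 * Q k"
proof -
  have a: "q (2*k+2) \<ge> 8 * q (2*k) + 1" using q_step[OF q1 qinc qgr, of "2*k"] assms by simp
  have b0: "q (2*k+1+2) \<ge> 8 * q (2*k+1) + 1" using q_step[OF q1 qinc qgr, of "2*k+1"] by simp
  have b: "q (Suc(Suc(Suc(2*k)))) \<ge> 8 * q (2*k+1) + 1" using b0 by (simp add: eval_nat_numeral)
  have c: "2*(k+1) = 2*k+2" "2*(k+1)+1 = Suc(Suc(Suc(2*k)))" by simp_all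
  show ?thesis using a b lin unfolding qi_def c by auto
qed

lemma Qlt: "k \<ge> 1 \<Longrightarrow> Q k < Q (k+1)"
  using Qstep[of k] Qpos[of k] by linarith

lemma Qmono: assumes "1 \<le> k" "k \<le> k'" shows "Q k \<le> Q k'"
  using assms(2)
proof (induction k' rule: dec_induct)
  case base then show ?case by simp
next
  case (step n) then show ?case using Qlt[of n] assms(1) by simp
qed

lemma Qge: "k \<ge> 1 \<Longrightarrow> Q k \<ge> k"
proof (induction k rule: dec_induct)
  case base then show ?case using Qpos[of 1] by simp
next
  case (step n) then show ?case using Qlt[of n] by simp
qed

lemma Lbound: assumes "k \<ge> 1" shows "Li q l k * (3 * Q k) \<le> Q (k+1)"
proof -
  have p: "real (Q k) > 0" using Qpos[OF assms] by simp
  have "real (Li q l k) \<le> real (Q (k+1)) / (3 * real (Q k))"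
    unfolding Li_def using p
    by (simp add: of_nat_nat)
  then have "real (Li q l k) * (3 * real (Q k)) \<le> real (Q (k+1))"
    using p by (simp add: field_simps)
  then show ?thesis by (metis of_nat_le_iff of_nat_mult of_nat_numeral)
qed

lemma block_exists: assumes "Q 1 \<le> n" shows "\<exists>k\<ge>1. Q k \<le> n \<and> n < Q (k+1)"
proof -
  define m where "m = (LEAST m. m \<ge> 1 \<and> n < Q m)"
  have ex: "n+1 \<ge> 1 \<and> n < Q (n+1)" using Qge[of "n+1"] by simp
  have m1: "m \<ge> 1 \<and> n < Q m" unfolding m_def by (rule LeastI[of _ "n+1"], rule ex)
  have m2: "m \<noteq> 1" using m1 assms by auto
  have "\<not> (m - 1 \<ge> 1 \<and> n < Q (m-1))"
    unfolding m_def by (rule not_less_Least) (use m1 m2 m_def in auto)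
  then show ?thesis using m1 m2 by (intro exI[of _ "m-1"]) auto
qed

lemma block_val: assumes "y \<in> Pi q l" "k \<ge> 1"
  shows "\<exists>p\<le>Q k. \<forall>n. Q k \<le> n \<and> n < Q (k+1) \<longrightarrow> y n = rshift p (si q l k) n"
proof -
  from assms have "seg y (Q k) (Q (k+1) - 1) \<in> Ri q l k" unfolding Pi_def by auto
  then obtain p where p: "p \<le> Q k" and e: "seg y (Q k) (Q (k+1) - 1) = seg (rshift p (si q l k)) (Q k) (Q (k+1) - 1)"
    unfolding Ri_def by auto
  have "Q (k+1) - 1 + 1 = Q (k+1)" using Qlt[OF assms(2)] by simp
  then have "map y [Q k..<Q (k+1)] = map (rshift p (si q l k)) [Q k..<Q (k+1)]" using e unfolding seg_def by simp
  then show ?thesis using p by (intro exI[of _ p]) (auto simp: map_eq_conv)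
qed

lemma rshift_nz: assumes "rshift p (si q l k) n \<noteq> 0"
  shows "\<exists>j. 1 \<le> j \<and> j \<le> 2 * Li q l k \<and> n = p + j * Q k"
proof -
  have "n > p" using assms unfolding rshift_def by (auto split: if_splits)
  moreover have "si q l k (n - p) \<noteq> 0" using assms unfolding rshift_def by (auto split: if_splits)
  ultimately have np: "n = p + (n - p)" by simp
  have "\<exists>j. 1 \<le> j \<and> j \<le> 2 * Li q l k \<and> n - p = j * Q k"
  proof (cases "n - p \<ge> 1 \<and> (\<exists>j. 1 \<le> j \<and> j \<le> Li q l k \<and> n - p = j * Q k)")
    case True then show ?thesis by auto
  next
    case False
    then have "n - p \<ge> 1 \<and> (\<exists>j. Li q l k < j \<and> j \<le> 2 * Li q l k \<and> n - p = j * Q k)"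
      using \<open>si q l k (n - p) \<noteq> 0\<close> unfolding si_def by (auto split: if_splits)
    then show ?thesis by (metis less_imp_le_nat not_less_zero linorder_not_le le_trans less_one)
  qed
  then show ?thesis using np by (metis add.commute)
qed


lemma gap: assumes "y \<in> Pi q l" "k \<ge> 1" "Q k \<le> a" "a < b" "y a \<noteq> 0" "y b \<noteq> 0"
  shows "Q k \<le> b - a"
proof -
  have "Q 1 \<le> a" using Qmono[of 1 k] assms by simp
  then obtain k' where k': "k' \<ge> 1" "Q k' \<le> a" "a < Q (k'+1)" using block_exists by blast
  have kk: "k \<le> k'"
  proof (rule ccontr)
    assume "\<not> k \<le> k'"
    then have "k'+1 \<le> k" by simp
    then have "Q (k'+1) \<le> Q k" using Qmono k' by simp
    then show False using k' assms by simp
  qed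
  have Qkk: "Q k \<le> Q k'" using Qmono assms kk by simp
  obtain p where p: "p \<le> Q k'" and pv: "\<forall>n. Q k' \<le> n \<and> n < Q (k'+1) \<longrightarrow> y n = rshift p (si q l k') n"
    using block_val[OF assms(1) k'(1)] by blast
  have "rshift p (si q l k') a \<noteq> 0" using pv k' assms by auto
  then obtain j where j: "1 \<le> j" "j \<le> 2 * Li q l k'" "a = p + j * Q k'" using rshift_nz by blast
  show ?thesis
  proof (cases "b < Q (k'+1)")
    case True
    then have "rshift p (si q l k') b \<noteq> 0" using pv k' assms by auto
    then obtain j' where j': "b = p + j' * Q k'" using rshift_nz by blast
    have "j * Q k' < j' * Q k'" using j j' assms(4) by simp
    then have "j < j'" using mult_less_cancel2 by blast
    then have "(j+1) * Q k' \<le> j' * Q k'" by (intro mult_le_mono1) simp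
    then show ?thesis using j j' Qkk by simp
  next
    case False
    have L: "Li q l k' * (3 * Q k') \<le> Q (k'+1)" by (rule Lbound[OF k'(1)])
    have S: "Q (k'+1) \<ge> 6 * Q k'" by (rule Qstep[OF k'(1)])
    define X where "X = Li q l k' * Q k'"
    have L': "3 * X \<le> Q (k'+1)" using L unfolding X_def by (simp add: algebra_simps)
    have "j * Q k' \<le> 2 * Li q l k' * Q k'" using j(2) by (intro mult_le_mono1)
    then have "j * Q k' \<le> 2 * X" unfolding X_def by simp
    then have a': "a \<le> Q k' + 2 * X" using j p by linarith
    then show ?thesis using L' S False Qkk by linarith
  qed
qed

lemma good_orbit: "\<exists>N0. \<forall>x\<in>(\<Union>n. (Tmap ^^ n) ` (Pi q l \<times> Zspace)). good D N0 (fst x)"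
proof (intro exI[of _ "Q (max 1 D)"] ballI)
  fix x assume "x \<in> (\<Union>n. (Tmap ^^ n) ` (Pi q l \<times> Zspace))"
  then obtain n y z where x: "x = (Tmap ^^ n) (y, z)" and y: "y \<in> Pi q l" by auto
  let ?k = "max 1 D"
  show "good D (Q ?k) (fst x)" unfolding good_def
  proof (intro allI impI)
    fix a b assume h: "1 \<le> a" "Q ?k \<le> a" "a < b" "fst x a \<noteq> 0" "fst x b \<noteq> 0"
    have "fst x a = y (a + n)" "fst x b = y (b + n)" using fst_iter[of a n "(y,z)"] fst_iter[of b n "(y,z)"] h x by auto
    then have "Q ?k \<le> (b + n) - (a + n)" using h by (intro gap[OF y]) auto
    moreover have "D \<le> Q ?k" using Qge[of ?k] by simp
    ultimately show "D \<le> b - a" by simp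
  qed
qed

end


theorem mainTheorem11:
  fixes q :: "nat \<Rightarrow> nat" and l M H :: nat and p :: "(nat \<Rightarrow> int) \<times> (int \<Rightarrow> int)"
  assumes "2 \<le> q 1"
    and "\<And>k. k \<ge> 1 \<Longrightarrow> q k < q (k+1)"
    and "\<And>k. k \<ge> 1 \<Longrightarrow> q (k+1) > q k ^ 4 + 3 * q k"
    and "l \<in> {0, 1, 2, 3}" and "M \<ge> 1" and "H \<ge> 1"
    and "p \<in> Xi q l"
  shows "\<exists>\<Lambda> :: nat set. \<Lambda> \<subseteq> {1..} \<and>
           (\<lambda>N. real (card ({1..N} \<inter> \<Lambda>)) / real N) \<longlonglongrightarrow> 1 \<and>
           (\<forall>n\<in>\<Lambda>. \<forall>h<H. trunc M ((Tmap ^^ (n + h)) p) = trunc M ((Tmap ^^ n) p))"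
proof -
  interpret qs q l using assms(1-4) by unfold_locales auto
  define y where "y = fst p"
  define W where "W = H + M"
  define Lam where "Lam = {n. 1 \<le> n \<and> (\<forall>t. n < t \<and> t \<le> n + W \<longrightarrow> y t = 0)}"
  have g: "\<exists>N0. good D N0 y" for D
  proof -
    obtain N0 where "\<forall>x\<in>(\<Union>n. (Tmap ^^ n) ` (Pi q l \<times> Zspace)). good D N0 (fst x)" using good_orbit by blast
    then have "good D N0 (fst p)" using assms(7) unfolding Xi_def by (rule good_closure)
    then show ?thesis unfolding y_def by blast
  qed
  have lim: "(\<lambda>N. real (card ({1..N} \<inter> Lam)) / real N) \<longlonglongrightarrow> 1" by (rule density[OF g Lam_def])
  show ?thesis
  proof (intro exI[of _ Lam] conjI)
    show "Lam \<subseteq> {1..}" unfolding Lam_def by auto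
    show "(\<lambda>N. real (card ({1..N} \<inter> Lam)) / real N) \<longlonglongrightarrow> 1" by (rule lim)
    show "\<forall>n\<in>Lam. \<forall>h<H. trunc M ((Tmap ^^ (n + h)) p) = trunc M ((Tmap ^^ n) p)"
    proof (intro ballI allI impI)
      fix n h assume n: "n \<in> Lam" and h: "h < H"
      have z: "\<And>t. n < t \<Longrightarrow> t \<le> n + W \<Longrightarrow> y t = 0" using n unfolding Lam_def by auto
      have f: "map (fst ((Tmap ^^ (n + h)) p)) [1..<M+1] = map (fst ((Tmap ^^ n) p)) [1..<M+1]"
      proof (rule map_cong[OF refl])
        fix m assume "m \<in> set [1..<M+1]"
        then have m: "1 \<le> m" "m \<le> M" by auto
        have "fst ((Tmap ^^ (n + h)) p) m = y (m + (n+h))" using fst_iter m(1) unfolding y_def by simp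
        also have "\<dots> = 0" using z m h unfolding W_def by simp
        also have "0 = y (m + n)" using z m unfolding W_def by simp
        also have "\<dots> = fst ((Tmap ^^ n) p) m" using fst_iter m(1) unfolding y_def by simp
        finally show "fst ((Tmap ^^ (n + h)) p) m = fst ((Tmap ^^ n) p) m" .
      qed
      have sm: "(\<Sum>i\<in>{1..n+h}. fst p i) = (\<Sum>i\<in>{1..n}. fst p i)"
      proof -
        have "(\<Sum>i\<in>{1..n+h}. fst p i) = (\<Sum>i\<in>{1..n}. fst p i) + (\<Sum>i\<in>{n+1..n+h}. fst p i)"
          by (rule sum.ub_add_nat) simp
        moreover have "(\<Sum>i\<in>{n+1..n+h}. fst p i) = 0"
          by (rule sum.neutral) (use z h in \<open>auto simp: W_def y_def\<close>)
        ultimately show ?thesis by simp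
      qed
      have s: "snd ((Tmap ^^ (n + h)) p) = snd ((Tmap ^^ n) p)" using sm by (simp add: snd_iter)
      show "trunc M ((Tmap ^^ (n + h)) p) = trunc M ((Tmap ^^ n) p)" unfolding trunc_def using f s by simp
    qed
  qed
qed

end
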